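(* Suppose the nearest neighbor algorithm (NNA) terminates normally and outputs the route $\mathcal{M}_2=(1,m_2^*,\dots,m_{L_2}^* )$ with $m_{L_2}^*=D$. Let $\mathcal{M}_1=(1,m_2,\dots,m_{L_1})$ with $m_{L_1}=D$ be any route from the source to the destination, where $L_1$ need not equal $L_2$. Then $R_{\mathrm{DF}}(\mathcal{M}_2)\ge R_{\mathrm{DF}}(\mathcal{M}_1)$.
   Context: Network: a finite set of nodes $\mathcal{S}=\{1,2,\dots,D\}$, $D\ge 2$. Node $1$ is the source and node $D$ is the destination. Received powers: for distinct nodes $i,t$, the power received at $t$ from $i$ is a positive real number $P_{it}$. All receivers have the same noise power $N>0$. Routes: a route is an ordered tuple of distinct nodes $\mathcal{M}=(m_1,\dots,m_L)$ with $m_1=1$ and $L\ge1$. It is a route from the source to the destination if moreover $m_L=D$. For $a\notin\mathcal{M}$, $\mathcal{M}\cup\{a\}$ denotes $(m_1,\dots,m_L,a)$. DF with independent codewords: the reception rate of node $m_t$ ($2\le t\le L$) in route $\mathcal{M}$ is $$R_{m_t}(\mathcal{M})=\tfrac12\log\Big(1+N^{-1}\sum_{i=1}^{t-1}P_{m_i m_t}\Big).$$ The supported DF rate (for $L\ge2$) is $R_{\mathrm{DF}}(\mathcal{M})=\min_{2\le t\le L}R_{m_t}(\mathcal{M})$. Nearest neighbor: node $i\notin\mathcal{M}$ is a nearest neighbor with respect to route $\mathcal{M}$ iff $P_{mi}\ge P_{mj}$ for all $m\in\mathcal{M}$ and all $j\in\mathcal{S}\setminus(\mathcal{M}\cup\{i\})$.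 NNA: 1. Start with $\mathcal{M}=(1)$. 2. If there is a unique nearest neighbor $i^*$ with respect to the current $\mathcal{M}$, set $\mathcal{M}\leftarrow\mathcal{M}\cup\{i^*\}$; otherwise the algorithm terminates prematurely. 3. Repeat step 2 until node $D$ has been appended, in which case the algorithm terminates normally and outputs $\mathcal{M}$. *)

theory Defs
  imports Complex_Main
begin

text \<open>Nodes are 1..D. A route is a list of distinct nodes starting with node 1.
  List positions are 0-based: position t corresponds to m_(t+1).\<close>

definition nodes :: "nat \<Rightarrow> nat set" where
  "nodes D = {1..D}"

definition is_route :: "nat \<Rightarrow> nat list \<Rightarrow> bool" where
  "is_route D M \<longleftrightarrow> M \<noteq> [] \<and> hd M = 1 \<and> distinct M \<and> set M \<subseteq> nodes D"

definition is_sd_route :: "nat \<Rightarrow> nat list \<Rightarrow> bool" where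
  "is_sd_route D M \<longleftrightarrow> is_route D M \<and> last M = D"

definition reception_rate :: "real \<Rightarrow> (nat \<Rightarrow> nat \<Rightarrow> real) \<Rightarrow> nat list \<Rightarrow> nat \<Rightarrow> real" where
  "reception_rate N P M t =
     (1/2) * log 2 (1 + (\<Sum>i<t. P (M ! i) (M ! t)) / N)"

text \<open>Supported DF rate: minimum over positions 2..L (1-based), i.e. 1..<length M.\<close>
definition R_DF :: "real \<Rightarrow> (nat \<Rightarrow> nat \<Rightarrow> real) \<Rightarrow> nat list \<Rightarrow> real" where
  "R_DF N P M = Min ((reception_rate N P M) ` {1..<length M})"

definition nearest_neighbor :: "nat \<Rightarrow> (nat \<Rightarrow> nat \<Rightarrow> real) \<Rightarrow> nat list \<Rightarrow> nat \<Rightarrow> bool" where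
  "nearest_neighbor D P M i \<longleftrightarrow>
     i \<in> nodes D - set M \<and>
     (\<forall>m\<in>set M. \<forall>j\<in>nodes D - (set M \<union> {i}). P m j \<le> P m i)"

inductive nna_run :: "nat \<Rightarrow> (nat \<Rightarrow> nat \<Rightarrow> real) \<Rightarrow> nat list \<Rightarrow> bool"
  for D :: nat and P :: "nat \<Rightarrow> nat \<Rightarrow> real" where
  start: "nna_run D P [1]"
| step: "\<lbrakk> nna_run D P M; D \<notin> set M; \<exists>!i. nearest_neighbor D P M i;
           nearest_neighbor D P M i \<rbrakk> \<Longrightarrow> nna_run D P (M @ [i])"

definition nna_output :: "nat \<Rightarrow> (nat \<Rightarrow> nat \<Rightarrow> real) \<Rightarrow> nat list \<Rightarrow> bool" where
  "nna_output D P M \<longleftrightarrow> nna_run D P M \<and> D \<in> set M"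

end

theory Submission
  imports Defs
begin

lemma nna_inv:
  assumes "nna_run D P M" "D \<ge> 1"
  shows "M \<noteq> [] \<and> hd M = 1 \<and> distinct M \<and> set M \<subseteq> nodes D \<and>
    (\<forall>t. 0 < t \<and> t < length M \<longrightarrow> nearest_neighbor D P (take t M) (M!t) \<and> D \<notin> set (take t M))"
  using assms
proof (induction rule: nna_run.induct)
  case start
  then show ?case by (auto simp: nodes_def)
next
  case (step M i)
  have nn: "i \<in> nodes D" "i \<notin> set M" using step(4) by (auto simp: nearest_neighbor_def)
  have A: "M @ [i] \<noteq> [] \<and> hd (M@[i]) = 1 \<and> distinct (M@[i]) \<and> set (M@[i]) \<subseteq> nodes D"
    using step nn by auto
  have B: "nearest_neighbor D P (take t (M@[i])) ((M@[i])!t) \<and> D \<notin> set (take t (M@[i]))"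
    if "0 < t" "t < length (M@[i])" for t
  proof (cases "t < length M")
    case True
    then show ?thesis using step that by (auto simp: nth_append)
  next
    case False
    then have "t = length M" using that by simp
    then show ?thesis using step by auto
  qed
  show ?case using A B by blast
qed

lemma rate_mono:
  assumes "N > 0" "0 \<le> x" "x \<le> y"
  shows "(1/2) * log 2 (1 + x / N) \<le> (1/2) * log 2 (1 + y / N)"
proof -
  have "x / N \<le> y / N" using assms by (simp add: divide_right_mono)
  moreover have "0 \<le> x / N" using assms by simp
  ultimately show ?thesis by simp
qed

theorem lemma4:
  fixes D :: nat and N :: real and P :: "nat \<Rightarrow> nat \<Rightarrow> real"
    and M1 M2 :: "nat list"
  assumes "D \<ge> 2"
    and "N > 0"
    and Ppos: "\<And>i t. i \<in> nodes D \<Longrightarrow> t \<in> nodes D \<Longrightarrow> i \<noteq> t \<Longrightarrow> P i t > 0"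
    and "nna_output D P M2"
    and "is_sd_route D M1"
  shows "R_DF N P M2 \<ge> R_DF N P M1"
proof -
  have run: "nna_run D P M2" and DM2: "D \<in> set M2" using assms(4) by (auto simp: nna_output_def)
  note inv = nna_inv[OF run] 
  have I: "M2 \<noteq> []" "hd M2 = 1" "distinct M2" "set M2 \<subseteq> nodes D"
    "\<And>t. 0 < t \<Longrightarrow> t < length M2 \<Longrightarrow> nearest_neighbor D P (take t M2) (M2!t) \<and> D \<notin> set (take t M2)"
    using inv assms(1) by auto
  have M20: "M2 ! 0 = 1" using I(1,2) by (simp add: hd_conv_nth)
  have len2: "length M2 \<ge> 2"
  proof -
    obtain j where j: "j < length M2" "M2 ! j = D" using DM2 by (auto simp: in_set_conv_nth)
    have "j \<noteq> 0" proof assume "j = 0" then show False using j M20 assms(1) by simp qed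
    then show ?thesis using j by linarith
  qed
  have M1: "M1 \<noteq> []" "hd M1 = 1" "distinct M1" "set M1 \<subseteq> nodes D" "last M1 = D"
    using assms(5) by (auto simp: is_sd_route_def is_route_def)
  have M10: "M1 ! 0 = 1" using M1(1,2) by (simp add: hd_conv_nth)
  have fin: "finite ((reception_rate N P M2) ` {1..<length M2})" by simp
  have ne: "(reception_rate N P M2) ` {1..<length M2} \<noteq> {}" using len2 by simp
  have "R_DF N P M2 \<in> (reception_rate N P M2) ` {1..<length M2}"
    unfolding R_DF_def using fin ne by (rule Min_in)
  then obtain t where t: "t \<in> {1..<length M2}" "R_DF N P M2 = reception_rate N P M2 t"
    by blast
  define S where "S = set (take t M2)"
  define a where "a = M2 ! t"
  have nnt: "nearest_neighbor D P (take t M2) a" "D \<notin> S" using I(5)[of t] t by (auto simp: S_def a_def)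
  have S_nodes: "S \<subseteq> nodes D" unfolding S_def using set_take_subset I(4) by (rule subset_trans)
  have oneS: "1 \<in> S" using t M20 I(1) by (auto simp: S_def in_set_conv_nth intro!: exI[of _ 0])
  have ex: "\<exists>k. k < length M1 \<and> M1 ! k \<notin> S"
    using M1(1,5) nnt(2) by (intro exI[of _ "length M1 - 1"]) (auto simp: last_conv_nth)
  define k where "k = (LEAST k. k < length M1 \<and> M1 ! k \<notin> S)"
  have k: "k < length M1" "M1 ! k \<notin> S" using LeastI_ex[OF ex] k_def by auto
  have kmin: "\<And>i. i < k \<Longrightarrow> M1 ! i \<in> S"
    using k(1) not_less_Least k_def by fastforce
  have k0: "k \<noteq> 0" proof assume "k = 0" then show False using k(2) M10 oneS by simp qed
  define b where "b = M1 ! k"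
  have bnodes: "b \<in> nodes D" using k(1) M1(4) b_def by auto
  have bS: "b \<notin> S" using k b_def by simp
  have inj: "inj_on ((!) M1) {..<k}" using M1(3) k(1)
    by (auto simp: inj_on_def nth_eq_iff_index_eq)
  have "(\<Sum>i<k. P (M1 ! i) (M1 ! k)) = (\<Sum>s\<in>(!) M1 ` {..<k}. P s b)"
    using sum.reindex[OF inj, of "\<lambda>s. P s b"] b_def by simp
  also have "\<dots> \<le> (\<Sum>s\<in>S. P s b)"
  proof (rule sum_mono2)
    show "finite S" by (simp add: S_def)
    show "(!) M1 ` {..<k} \<subseteq> S" using kmin by auto
    fix s assume "s \<in> S - (!) M1 ` {..<k}"
    then have "s \<in> nodes D" "s \<noteq> b" using S_nodes bS by auto
    then show "0 \<le> P s b" using Ppos[of s b] bnodes by simp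
  qed
  also have "\<dots> \<le> (\<Sum>s\<in>S. P s a)"
  proof (rule sum_mono)
    fix s assume s: "s \<in> S"
    show "P s b \<le> P s a"
    proof (cases "b = a")
      case False
      then have "b \<in> nodes D - (S \<union> {a})" using bnodes bS by auto
      then show ?thesis using nnt(1) s by (auto simp: nearest_neighbor_def S_def)
    qed simp
  qed
  also have "(\<Sum>s\<in>S. P s a) = (\<Sum>i<t. P (M2 ! i) (M2 ! t))"
  proof -
    have t2: "t < length M2" using t by auto
    have "S = (!) M2 ` {..<t}" using t2 unfolding S_def by (simp add: nth_image flip: atLeast0LessThan)
    moreover have "inj_on ((!) M2) {..<t}" using I(3) t2 by (auto simp: inj_on_def nth_eq_iff_index_eq)
    ultimately show ?thesis using sum.reindex[of "(!) M2" "{..<t}" "\<lambda>s. P s a"] a_def by simp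
  qed
  finally have le: "(\<Sum>i<k. P (M1 ! i) (M1 ! k)) \<le> (\<Sum>i<t. P (M2 ! i) (M2 ! t))" .
  have nn0: "0 \<le> (\<Sum>i<k. P (M1 ! i) (M1 ! k))"
  proof (rule sum_nonneg)
    fix i assume "i \<in> {..<k}"
    then have "i < length M1" "M1 ! i \<noteq> M1 ! k" using k(1) M1(3) by (auto simp: nth_eq_iff_index_eq)
    moreover have "M1 ! i \<in> nodes D" "M1 ! k \<in> nodes D" using M1(4) k(1) \<open>i < length M1\<close> by auto
    ultimately show "0 \<le> P (M1 ! i) (M1 ! k)" using Ppos[of "M1 ! i" "M1 ! k"] by simp
  qed
  have "R_DF N P M1 \<le> reception_rate N P M1 k"
    unfolding R_DF_def using k k0 by (intro Min_le) auto
  also have "\<dots> \<le> reception_rate N P M2 t"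
    unfolding reception_rate_def using rate_mono[OF assms(2) nn0 le] by simp
  finally show ?thesis using t(2) by simp
qed

end
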